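(* For any integers $k, m \ge 1$, \[ B(k,m) = \sum_{a=1}^{2k-m-1}\left[\binom{m}{k-a} - \binom{m}{k}\right] \] (an empty sum being $0$). Consequently, for $2 \le k \le m$, the number of Grassmannian permutations of $[m]$ avoiding $\operatorname{id}_k=12\cdots k$ equals this sum.
   Context: For $k \ge 1$ and $m \ge 0$, $B(k,m)$ is the number of binary words of length $m$ that avoid (i.e. do not contain as a not-necessarily-contiguous subsequence) every word $0^j1^{k-j}$ for $j \in \{0,1,\dots,k\}$. A permutation is Grassmannian if it has at most one descent; pattern containment/avoidance is the usual notion for permutations. Binomial coefficients $\binom{p}{q}$ are $0$ when $q<0$ or $q>p$. *)

theory Defs
  imports Main "HOL-Library.Sublist"
begin

text \<open>Binary words are lists of booleans; the letter 0 is False and 1 is True.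
  Containment as a (not necessarily contiguous) subsequence is Sublist.subseq.\<close>

definition B :: "nat \<Rightarrow> nat \<Rightarrow> nat" where
  "B k m = card {w :: bool list. length w = m \<and>
     (\<forall>j \<in> {0..k}. \<not> subseq (replicate j False @ replicate (k - j) True) w)}"

text \<open>Binomial coefficient with integer lower index, zero when the lower index is negative
  (and, via choose, zero when it exceeds the upper index).\<close>

definition binom_int :: "nat \<Rightarrow> int \<Rightarrow> int" where
  "binom_int p q = (if q < 0 then 0 else int (p choose nat q))"

definition is_perm :: "nat \<Rightarrow> nat list \<Rightarrow> bool" where
  "is_perm m p \<longleftrightarrow> length p = m \<and> distinct p \<and> set p = {1..m}"

definition descents :: "nat list \<Rightarrow> nat set" where
  "descents p = {i. Suc i < length p \<and> p ! i > p ! Suc i}"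

definition grassmannian :: "nat list \<Rightarrow> bool" where
  "grassmannian p \<longleftrightarrow> card (descents p) \<le> 1"

definition contains_pattern :: "nat list \<Rightarrow> nat list \<Rightarrow> bool" where
  "contains_pattern p \<sigma> \<longleftrightarrow> (\<exists>q. subseq q p \<and> length q = length \<sigma> \<and>
     (\<forall>i < length \<sigma>. \<forall>j < length \<sigma>. q ! i < q ! j \<longleftrightarrow> \<sigma> ! i < \<sigma> ! j))"

definition avoids :: "nat list \<Rightarrow> nat list \<Rightarrow> bool" where
  "avoids p \<sigma> \<longleftrightarrow> \<not> contains_pattern p \<sigma>"

definition id_perm :: "nat \<Rightarrow> nat list" where
  "id_perm k = [1..<Suc k]"

end

theory Submission
  imports Defs
begin


fun hh :: "bool list \<Rightarrow> nat" where
  "hh [] = 0"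
| "hh (False # w) = Suc (hh w)"
| "hh (True # w) = max (Suc (count_list w True)) (hh w)"

definition pat :: "nat \<Rightarrow> nat \<Rightarrow> bool list" where
  "pat j k = replicate j False @ replicate (k - j) True"

lemma rep_subseq: "subseq (replicate n x) w \<longleftrightarrow> n \<le> count_list w x"
proof (induction w arbitrary: n)
  case Nil then show ?case by (auto dest: list_emb_Nil2)
next
  case (Cons y w)
  show ?case
  proof (cases n)
    case 0 then show ?thesis by simp
  next
    case (Suc n')
    have e: "replicate n x = x # replicate n' x" using Suc by simp
    show ?thesis
    proof (cases "x = y")
      case True
      then show ?thesis unfolding e using Cons.IH[of n'] Suc by simp
    next
      case False
      then have "subseq (x # replicate n' x) (y # w) = subseq (x # replicate n' x) w" by simp
      then show ?thesis unfolding e using Cons.IH[of "Suc n'"] False Suc by simp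
    qed
  qed
qed

lemma ones_le_hh: "count_list w True \<le> hh w"
  by (induction w rule: hh.induct) auto

lemma PP_iff: "(\<exists>j\<le>k. subseq (pat j k) w) \<longleftrightarrow> k \<le> hh w"
proof (induction w arbitrary: k)
  case Nil
  show ?case by (auto simp: pat_def dest: list_emb_Nil2)
next
  case (Cons x w)
  show ?case
  proof (cases x)
    case False
    have "k \<le> Suc (hh w)" if "j \<le> k" "subseq (pat j k) (False # w)" for j
    proof (cases j)
      case 0
      then have "subseq (replicate k True) (False # w)" using that by (simp add: pat_def)
      then have "k \<le> count_list w True" by (simp add: rep_subseq)
      then show ?thesis using ones_le_hh[of w] by simp
    next
      case (Suc j')
      then have "pat j k = False # pat j' (k - 1)" using that(1) by (simp add: pat_def)
      then have "subseq (pat j' (k-1)) w" using that(2) by simp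
      then have "k - 1 \<le> hh w" using Cons.IH[of "k-1"] Suc that(1) by auto
      then show ?thesis by simp
    qed
    moreover have "\<exists>j\<le>k. subseq (pat j k) (False # w)" if hk: "k \<le> Suc (hh w)"
    proof (cases k)
      case 0 then show ?thesis by (auto simp: pat_def)
    next
      case (Suc k')
      then obtain j where j: "j \<le> k'" "subseq (pat j k') w" using Cons.IH[of k'] hk Suc by auto
      have "pat (Suc j) k = False # pat j k'" using Suc by (simp add: pat_def)
      then show ?thesis using j Suc by (intro exI[of _ "Suc j"]) auto
    qed
    ultimately show ?thesis using False by auto
  next
    case True
    have "k \<le> max (Suc (count_list w True)) (hh w)" if "j \<le> k" "subseq (pat j k) (True # w)" for j
    proof (cases j)
      case 0
      then have "subseq (replicate k True) (True # w)" using that by (simp add: pat_def)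
      then have "k \<le> Suc (count_list w True)" by (simp add: rep_subseq)
      then show ?thesis by simp
    next
      case (Suc j')
      then have "pat j k = False # pat j' (k - 1)" using that(1) by (simp add: pat_def)
      then have "subseq (pat j k) w" using that(2) by simp
      then have "k \<le> hh w" using Cons.IH[of k] that(1) by auto
      then show ?thesis by simp
    qed
    moreover have "\<exists>j\<le>k. subseq (pat j k) (True # w)" if hk: "k \<le> max (Suc (count_list w True)) (hh w)"
    proof (cases "k \<le> Suc (count_list w True)")
      case True
      then have "subseq (replicate k True) (True # w)" by (simp add: rep_subseq)
      then show ?thesis by (intro exI[of _ 0]) (simp add: pat_def)
    next
      case False
      then have "k \<le> hh w" using hk by simp
      then obtain j where "j \<le> k" "subseq (pat j k) w" using Cons.IH[of k] by auto
      then show ?thesis by auto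
    qed
    ultimately show ?thesis using True by auto
  qed
qed

definition Wset :: "nat \<Rightarrow> nat \<Rightarrow> nat \<Rightarrow> bool list set" where
  "Wset m z k = {w. length w = m \<and> count_list w False = z \<and> hh w < k}"

lemma finite_len: "finite {w :: bool list. length w = m}"
  using finite_lists_length_eq[of "UNIV :: bool set" m] by simp

lemma finite_Wset: "finite (Wset m z k)"
  by (rule finite_subset[OF _ finite_len[of m]]) (auto simp: Wset_def)

lemma count_TF: "count_list w True + count_list w False = length (w :: bool list)"
  by (induction w) auto

lemma Wset_Suc: "Wset (Suc m) z k =
   Cons False ` (if 0 < z then Wset m (z-1) (k-1) else {}) \<union>
   Cons True ` (if Suc (m - z) < k then Wset m z k else {})"
proof -
  have "w \<in> Wset (Suc m) z k \<longleftrightarrow>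
     w \<in> Cons False ` (if 0 < z then Wset m (z-1) (k-1) else {}) \<union>
      Cons True ` (if Suc (m - z) < k then Wset m z k else {})" for w
  proof (cases w)
    case Nil then show ?thesis by (auto simp: Wset_def)
  next
    case (Cons x v)
    have c: "count_list v True = length v - count_list v False" using count_TF[of v] by simp
    show ?thesis using Cons c by (cases x) (auto simp: Wset_def)
  qed
  then show ?thesis by blast
qed

definition G :: "nat \<Rightarrow> nat \<Rightarrow> nat \<Rightarrow> int" where
  "G m z k = (if z \<le> m \<and> z < k \<and> m - z < k then int (m choose z) - int (m choose k) else 0)"

lemma G_rec: "G (Suc m) z k = (if 0 < z then G m (z-1) (k-1) else 0) + (if Suc (m - z) < k then G m z k else 0)"
proof (cases z)
  case 0 then show ?thesis by (auto simp: G_def binomial_eq_0)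
next
  case (Suc z')
  show ?thesis
  proof (cases k)
    case 0 then show ?thesis using Suc by (simp add: G_def)
  next
    case (Suc k')
    note zk = \<open>z = Suc z'\<close> Suc
    have pz: "(Suc m choose Suc z') = (m choose z') + (m choose Suc z')" by simp
    have pk: "(Suc m choose Suc k') = (m choose k') + (m choose Suc k')" by simp
    show ?thesis
    proof (cases "z' \<le> m \<and> z' < k' \<and> m - z' \<le> k'")
      case False
      have 1: "G (Suc m) z k = 0" using False zk unfolding G_def by auto
      have 2: "G m (z-1) (k-1) = 0" using False zk unfolding G_def by auto
      have 3: "Suc (m - z) < k \<longrightarrow> G m z k = 0" using False zk unfolding G_def by auto
      show ?thesis using 1 2 3 by simp
    next
      case True
      show ?thesis
      proof (cases "m - z' < k'")
        case lt: True
        show ?thesis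
        proof (cases "z' = m")
          case True
          then show ?thesis using zk lt by (simp add: G_def binomial_eq_0)
        next
          case False
          have "m - Suc z' < k'" using lt by simp
          then show ?thesis using zk lt \<open>z' \<le> m \<and> z' < k' \<and> m - z' \<le> k'\<close> pz pk False by (simp add: G_def)
        qed
      next
        case False
        then have kk: "k' = m - z'" using True by simp
        have zm: "z' < m" using True kk by linarith
        have "(m choose z') = (m choose k')" using kk zm binomial_symmetric[of z' m] by simp
        then show ?thesis using zk zm kk pz pk by (simp add: G_def)
      qed
    qed
  qed
qed

lemma card_Wset: "int (card (Wset m z k)) = G m z k"
proof (induction m arbitrary: z k)
  case 0
  have "Wset 0 z k = (if z = 0 \<and> 0 < k then {[]} else {})" by (auto simp: Wset_def)
  then show ?case by (auto simp: G_def)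
next
  case (Suc m)
  have "card (Wset (Suc m) z k) = card (Cons False ` (if 0 < z then Wset m (z-1) (k-1) else {}))
      + card (Cons True ` (if Suc (m - z) < k then Wset m z k else {}))"
    unfolding Wset_Suc by (rule card_Un_disjoint) (auto intro: finite_Wset)
  also have "\<dots> = (if 0 < z then card (Wset m (z-1) (k-1)) else 0) + (if Suc (m - z) < k then card (Wset m z k) else 0)"
    by (simp add: card_image)
  finally show ?case using Suc.IH G_rec[of m z k] by simp
qed


lemma avoid_iff: "(\<forall>j \<in> {0..k}. \<not> subseq (replicate j False @ replicate (k - j) True) w) \<longleftrightarrow> hh w < k"
  using PP_iff[of k w] unfolding pat_def by auto

lemma B_sum: "int (B k m) = (\<Sum>z\<in>{0..m}. G m z k)"
proof -
  have e: "{w :: bool list. length w = m \<and>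
     (\<forall>j \<in> {0..k}. \<not> subseq (replicate j False @ replicate (k - j) True) w)} = (\<Union>z\<in>{0..m}. Wset m z k)"
    using count_le_length by (auto simp: avoid_iff Wset_def)
  have "B k m = card (\<Union>z\<in>{0..m}. Wset m z k)" unfolding B_def e ..
  also have "\<dots> = (\<Sum>z\<in>{0..m}. card (Wset m z k))"
    by (rule card_UN_disjoint) (auto simp: finite_Wset, auto simp: Wset_def)
  finally show ?thesis by (simp add: card_Wset)
qed

definition H :: "nat \<Rightarrow> nat \<Rightarrow> int \<Rightarrow> int" where
  "H m k z = binom_int m z - binom_int m (int k)"

lemma sum_shift: "(\<Sum>a \<in> {1..2 * int k - int m - 1}. binom_int m (int k - a) - binom_int m (int k))
   = (\<Sum>z \<in> {int m - int k + 1..int k - 1}. H m k z)"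
  by (rule sum.reindex_bij_witness[of _ "\<lambda>z. int k - z" "\<lambda>a. int k - a"]) (auto simp: H_def)

lemma H_out: "z \<in> {int m - int k + 1..int k - 1} \<Longrightarrow> z \<notin> {0..int m} \<Longrightarrow> H m k z = 0"
  unfolding H_def binom_int_def by (auto simp: binomial_eq_0)

lemma G_H: "G m z k = (if int z \<in> {int m - int k + 1..int k - 1} then H m k (int z) else 0)"
  if "z \<le> m" using that unfolding G_def H_def binom_int_def by auto

lemma part1: "int (B k m) = (\<Sum>a \<in> {1..2 * int k - int m - 1}. binom_int m (int k - a) - binom_int m (int k))"
proof -
  let ?Z = "{int m - int k + 1..int k - 1}"
  have "(\<Sum>z \<in> ?Z. H m k z) = (\<Sum>z \<in> ?Z. if z \<in> {0..int m} then H m k z else 0)"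
    by (rule sum.cong) (auto simp: H_out)
  also have "\<dots> = (\<Sum>z \<in> ?Z \<inter> {0..int m}. H m k z)"
    by (rule sum.inter_restrict[symmetric]) simp
  also have "\<dots> = (\<Sum>z \<in> {0..int m} \<inter> ?Z. H m k z)"
    by (simp add: Int_commute)
  also have "\<dots> = (\<Sum>z \<in> {0..int m}. if z \<in> ?Z then H m k z else 0)"
    by (rule sum.inter_restrict) simp
  also have "\<dots> = (\<Sum>z \<in> int ` {0..m}. if z \<in> ?Z then H m k z else 0)"
    by (simp add: image_int_atLeastAtMost)
  also have "\<dots> = (\<Sum>z \<in> {0..m}. if int z \<in> ?Z then H m k (int z) else 0)"
    by (simp add: sum.reindex)
  also have "\<dots> = (\<Sum>z \<in> {0..m}. G m z k)"
    by (rule sum.cong) (auto simp: G_H)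
  finally show ?thesis using B_sum sum_shift by simp
qed



declare upt_Suc[simp del]

definition fA :: "bool list \<Rightarrow> nat list" where
  "fA w = filter (\<lambda>v. \<not> w ! (v - 1)) [1..<Suc (length w)]"
definition fB :: "bool list \<Rightarrow> nat list" where
  "fB w = filter (\<lambda>v. w ! (v - 1)) [1..<Suc (length w)]"
definition perm :: "bool list \<Rightarrow> nat list" where
  "perm w = fA w @ fB w"

lemma subseq_set: "subseq xs ys \<Longrightarrow> set xs \<subseteq> set ys"
  by (auto elim: list_emb_set)

lemma subseq_sorted: "subseq xs ys \<Longrightarrow> sorted_wrt P ys \<Longrightarrow> sorted_wrt P xs"
proof (induction rule: list_emb.induct)
  case (list_emb_Nil ys) then show ?case by simp
next
  case (list_emb_Cons xs ys y) then show ?case by simp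
next
  case (list_emb_Cons2 x y xs ys)
  then show ?case using subseq_set[OF list_emb_Cons2(2)] by auto
qed

lemma subseq_map_inv: "subseq xs (map f ys) \<Longrightarrow> \<exists>zs. subseq zs ys \<and> xs = map f zs"
proof (induction ys arbitrary: xs)
  case Nil then show ?case by (auto dest: list_emb_Nil2)
next
  case (Cons y ys)
  show ?case
  proof (cases xs)
    case Nil then show ?thesis by (intro exI[of _ "[]"]) simp
  next
    case (Cons x xs')
    show ?thesis
    proof (cases "x = f y")
      case True
      then have "subseq xs' (map f ys)" using Cons.prems Cons by simp
      then obtain zs where "subseq zs ys" "xs' = map f zs" using Cons.IH by blast
      then show ?thesis using True Cons by (intro exI[of _ "y # zs"]) simp
    next
      case False
      then have "subseq xs (map f ys)" using Cons.prems Cons by simp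
      then obtain zs where "subseq zs ys" "xs = map f zs" using Cons.IH by blast
      then show ?thesis by (intro exI[of _ zs]) auto
    qed
  qed
qed

lemma map_const: "(\<forall>x\<in>set xs. f x = c) \<Longrightarrow> map f xs = replicate (length xs) c"
  by (induction xs) auto

lemma w_map: "map (\<lambda>v. w ! (v - 1)) [1..<Suc (length w)] = w"
  by (rule nth_equalityI) auto

lemma contains_id_iff: "contains_pattern p (id_perm k) \<longleftrightarrow> (\<exists>q. subseq q p \<and> length q = k \<and> sorted_wrt (<) q)"
proof -
  have e: "(\<forall>i < k. \<forall>j < k. q ! i < q ! j \<longleftrightarrow> id_perm k ! i < id_perm k ! j) \<longleftrightarrow> sorted_wrt (<) q"
    if "length q = k" for q :: "nat list"
  proof
    assume H: "\<forall>i < k. \<forall>j < k. q ! i < q ! j \<longleftrightarrow> id_perm k ! i < id_perm k ! j"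
    show "sorted_wrt (<) q" unfolding sorted_wrt_iff_nth_less
      using H that by (auto simp: id_perm_def nth_upt)
  next
    assume S: "sorted_wrt (<) q"
    show "\<forall>i < k. \<forall>j < k. q ! i < q ! j \<longleftrightarrow> id_perm k ! i < id_perm k ! j"
    proof (intro allI impI)
      fix i j assume ij: "i < k" "j < k"
      have "q ! i < q ! j \<longleftrightarrow> i < j"
      proof (cases "i < j")
        case True then show ?thesis using sorted_wrt_nth_less[OF S True] ij that by simp
      next
        case False
        then have "j < i \<or> j = i" by auto
        then show ?thesis
        proof
          assume "j < i" then show ?thesis using sorted_wrt_nth_less[OF S, of j i] ij that by simp
        qed simp
      qed
      then show "q ! i < q ! j \<longleftrightarrow> id_perm k ! i < id_perm k ! j"
        using ij by (simp add: id_perm_def nth_upt)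
    qed
  qed
  show ?thesis unfolding contains_pattern_def
    using e by (auto simp: id_perm_def)
qed

lemma contains_perm_iff: "contains_pattern (perm w) (id_perm k) \<longleftrightarrow> (\<exists>j\<le>k. subseq (pat j k) w)"
proof -
  let ?g = "\<lambda>v. w ! (v - 1)"
  let ?U = "[1..<Suc (length w)]"
  have U: "sorted_wrt (\<le>) ?U" using sorted_upt by simp
  have sA: "set (fA w) \<subseteq> set ?U" "set (fB w) \<subseteq> set ?U" unfolding fA_def fB_def by auto
  show ?thesis unfolding contains_id_iff
  proof
    assume "\<exists>q. subseq q (perm w) \<and> length q = k \<and> sorted_wrt (<) q"
    then obtain q where q: "subseq q (perm w)" "length q = k" "sorted_wrt (<) q" by blast
    from q(1) obtain q1 q2 where qq: "q = q1 @ q2" "subseq q1 (fA w)" "subseq q2 (fB w)"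
      unfolding perm_def by (auto elim: subseq_appendE)
    have "set q \<subseteq> set ?U" using subseq_set[OF q(1)] sA unfolding perm_def by auto
    then have "subseq q ?U" using sorted_subset_imp_subseq[OF _ q(3) U] by simp
    then have "subseq (map ?g q) (map ?g ?U)" by (rule subseq_map)
    then have s: "subseq (map ?g q) w" using w_map[of w] by simp
    have m1: "map ?g q1 = replicate (length q1) False"
      using subseq_set[OF qq(2)] by (intro map_const) (auto simp: fA_def)
    have m2: "map ?g q2 = replicate (length q2) True"
      using subseq_set[OF qq(3)] by (intro map_const) (auto simp: fB_def)
    have "map ?g q = pat (length q1) k" using m1 m2 qq(1) q(2) by (simp add: pat_def)
    then show "\<exists>j\<le>k. subseq (pat j k) w" using s qq(1) q(2) by (intro exI[of _ "length q1"]) auto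
  next
    assume "\<exists>j\<le>k. subseq (pat j k) w"
    then obtain j where j: "j \<le> k" "subseq (pat j k) w" by blast
    then have "subseq (pat j k) (map ?g ?U)" using w_map[of w] by simp
    then obtain zs where zs: "subseq zs ?U" "pat j k = map ?g zs" using subseq_map_inv by blast
    have lz: "length zs = k" using zs(2) j(1) by (metis length_map length_append length_replicate pat_def add_diff_inverse_nat not_less_iff_gr_or_eq le_less_trans)
    have sz: "sorted_wrt (<) zs" using subseq_sorted[OF zs(1)] by simp
    have t1: "map ?g (take j zs) = replicate j False"
      using zs(2) j(1) unfolding pat_def by (metis take_map append_eq_conv_conj length_replicate)
    have t2: "map ?g (drop j zs) = replicate (k - j) True"
      using zs(2) j(1) unfolding pat_def by (metis drop_map append_eq_conv_conj length_replicate)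
    have su1: "subseq (take j zs) ?U"
      using zs(1) by (meson prefix_imp_subseq subseq_order.order_trans take_is_prefix)
    have su2: "subseq (drop j zs) ?U"
      using zs(1) by (meson suffix_imp_subseq subseq_order.order_trans suffix_drop)
    have f1: "filter (\<lambda>v. \<not> ?g v) (take j zs) = take j zs"
    proof (rule filter_True)
      show "\<forall>x\<in>set (take j zs). \<not> ?g x"
      proof
        fix x assume "x \<in> set (take j zs)"
        then have "?g x \<in> set (map ?g (take j zs))" by simp
        then have "?g x \<in> set (replicate j False)" using t1 by metis
        then show "\<not> ?g x" by (cases "j = 0") auto
      qed
    qed
    have f2: "filter ?g (drop j zs) = drop j zs"
    proof (rule filter_True)
      show "\<forall>x\<in>set (drop j zs). ?g x"
      proof
        fix x assume "x \<in> set (drop j zs)"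
        then have "?g x \<in> set (map ?g (drop j zs))" by simp
        then have "?g x \<in> set (replicate (k - j) True)" using t2 by metis
        then show "?g x" by (cases "k - j = 0") auto
      qed
    qed
    have "subseq (take j zs) (fA w)" using subseq_filter[OF su1, of "\<lambda>v. \<not> ?g v"] f1 by (simp add: fA_def)
    moreover have "subseq (drop j zs) (fB w)" using subseq_filter[OF su2, of ?g] f2 by (simp add: fB_def)
    ultimately have "subseq (take j zs @ drop j zs) (perm w)" unfolding perm_def by (rule list_emb_append_mono)
    then show "\<exists>q. subseq q (perm w) \<and> length q = k \<and> sorted_wrt (<) q" using lz sz by auto
  qed
qed



lemma adj_sorted: "(\<forall>i. Suc i < length xs \<longrightarrow> xs!i < xs!Suc i) \<Longrightarrow> sorted_wrt (<) (xs::nat list)"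
  using sorted_wrt_iff_nth_Suc_transp[OF transp_on_less, of xs] by simp

lemma set_fA: "set (fA w) = {v. 1 \<le> v \<and> v \<le> length w \<and> \<not> w!(v-1)}"
  unfolding fA_def by auto
lemma set_fB: "set (fB w) = {v. 1 \<le> v \<and> v \<le> length w \<and> w!(v-1)}"
  unfolding fB_def by auto
lemma sorted_fA: "sorted_wrt (<) (fA w)"
  unfolding fA_def by (rule sorted_wrt_filter) simp
lemma sorted_fB: "sorted_wrt (<) (fB w)"
  unfolding fB_def by (rule sorted_wrt_filter) simp

lemma perm_is_perm: "is_perm (length w) (perm w)"
proof -
  have "length (perm w) = length w"
    unfolding perm_def fA_def fB_def using sum_length_filter_compl[of "\<lambda>v. \<not> w ! (v - 1)" "[1..<Suc (length w)]"]
    by simp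
  moreover have "distinct (perm w)" unfolding perm_def fA_def fB_def by auto
  moreover have "set (perm w) = {1..length w}" unfolding perm_def fA_def fB_def by auto
  ultimately show ?thesis unfolding is_perm_def by simp
qed

lemma desc_sub: "descents (perm w) \<subseteq> {length (fA w) - 1}"
proof
  fix i assume "i \<in> descents (perm w)"
  then have i: "Suc i < length (fA w) + length (fB w)" "perm w ! i > perm w ! Suc i"
    unfolding descents_def perm_def by auto
  show "i \<in> {length (fA w) - 1}"
  proof (rule ccontr)
    assume ne: "i \<notin> {length (fA w) - 1}"
    show False
    proof (cases "Suc i < length (fA w)")
      case True
      then have "perm w ! i = fA w ! i" "perm w ! Suc i = fA w ! Suc i"
        unfolding perm_def by (auto simp: nth_append)
      then show False using sorted_wrt_nth_less[OF sorted_fA, of i "Suc i" w] True i(2) by simp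
    next
      case False
      then have ge: "length (fA w) \<le> i" using ne by auto
      then have "perm w ! i = fB w ! (i - length (fA w))" "perm w ! Suc i = fB w ! Suc (i - length (fA w))"
        unfolding perm_def by (auto simp: nth_append Suc_diff_le)
      moreover have "Suc (i - length (fA w)) < length (fB w)" using ge i(1) by linarith
      ultimately show False using sorted_wrt_nth_less[OF sorted_fB, of "i - length (fA w)" "Suc (i - length (fA w))" w] ge i by simp
    qed
  qed
qed

lemma grass_perm: "grassmannian (perm w)"
  unfolding grassmannian_def using card_mono[OF _ desc_sub[of w]] by simp

lemma sorted_hh: "sorted w \<Longrightarrow> length w \<le> hh w"
proof (induction w)
  case Nil then show ?case by simp
next
  case (Cons x w)
  show ?case
  proof (cases x)
    case False then show ?thesis using Cons by simp
  next
    case True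
    then have "\<forall>y\<in>set w. y" using Cons.prems by auto
    then have "False \<notin> set w" by auto
    then have "count_list w True = length w" using count_TF[of w] by simp
    then show ?thesis using True by simp
  qed
qed

lemma desc_in: assumes "\<not> sorted w"
  shows "0 < length (fA w) \<and> length (fA w) - 1 \<in> descents (perm w)"
proof -
  obtain i j where ij: "i \<le> j" "j < length w" "\<not> (w!i \<le> w!j)"
    using assms unfolding sorted_iff_nth_mono by auto
  then have wij: "w!i" "\<not> w!j" "i < j" by (auto simp: le_bool_def intro: le_neq_implies_less)
  have xA: "Suc j \<in> set (fA w)" using wij ij by (simp add: set_fA)
  have yB: "Suc i \<in> set (fB w)" using wij ij by (simp add: set_fB)
  let ?n = "length (fA w)"
  have n0: "0 < ?n" using xA by (cases "fA w") auto
  obtain t where t: "t < ?n" "fA w ! t = Suc j" using xA by (auto simp: in_set_conv_nth)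
  obtain s where s: "s < length (fB w)" "fB w ! s = Suc i" using yB by (auto simp: in_set_conv_nth)
  have a: "fA w ! (?n - 1) \<ge> Suc j"
  proof (cases "t = ?n - 1")
    case True then show ?thesis using t by simp
  next
    case False
    have "t < ?n - 1" "?n - 1 < ?n" using False t n0 by linarith+
    then show ?thesis using sorted_wrt_nth_less[OF sorted_fA, of t "?n - 1" w] t by simp
  qed
  have b: "fB w ! 0 \<le> Suc i"
  proof (cases "s = 0")
    case True then show ?thesis using s by simp
  next
    case False
    then have "0 < s" by simp
    then show ?thesis using sorted_wrt_nth_less[OF sorted_fB, of 0 s w] s by simp
  qed
  have p1: "perm w ! (?n - 1) = fA w ! (?n - 1)" unfolding perm_def using n0 by (simp add: nth_append)
  have p2: "perm w ! Suc (?n - 1) = fB w ! 0" unfolding perm_def using n0 by (simp add: nth_append)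
  have l: "Suc (?n - 1) < length (perm w)" unfolding perm_def using n0 s(1) by (cases "fB w") auto
  show ?thesis using n0 a b p1 p2 l wij unfolding descents_def by simp
qed



lemma desc_eq: "\<not> sorted w \<Longrightarrow> descents (perm w) = {length (fA w) - 1}"
  using desc_sub[of w] desc_in[of w] by auto

lemma take_perm: "take (length (fA w)) (perm w) = fA w"
  unfolding perm_def by simp

lemma drop_perm: "drop (length (fA w)) (perm w) = fB w"
  unfolding perm_def by simp

lemma perm_inj: assumes "\<not> sorted w" "\<not> sorted w'" "length w = length w'" "perm w = perm w'"
  shows "w = w'"
proof -
  have "{length (fA w) - 1} = {length (fA w') - 1}" using desc_eq assms by metis
  then have "length (fA w) - 1 = length (fA w') - 1" by simp
  moreover have "0 < length (fA w)" "0 < length (fA w')" using desc_in[OF assms(1)] desc_in[OF assms(2)] by auto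
  ultimately have "length (fA w) = length (fA w')" by linarith
  then have e: "fA w = fA w'" using take_perm[of w] take_perm[of w'] assms(4) by metis
  show ?thesis
  proof (rule nth_equalityI)
    show "length w = length w'" by fact
  next
    fix i assume i: "i < length w"
    have "Suc i \<in> set (fA w) \<longleftrightarrow> Suc i \<in> set (fA w')" using e by simp
    then show "w ! i = w' ! i" using i assms(3) by (simp add: set_fA)
  qed
qed

lemma nonsorted_of_W: "hh w < k \<Longrightarrow> k \<le> length w \<Longrightarrow> \<not> sorted w"
  using sorted_hh[of w] by auto

lemma avoids_perm: "avoids (perm w) (id_perm k) \<longleftrightarrow> hh w < k"
  unfolding avoids_def contains_perm_iff PP_iff by auto

lemma surj_perm:
  assumes p: "is_perm m p" "grassmannian p" "avoids p (id_perm k)" and km: "k \<le> m"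
  shows "\<exists>w. length w = m \<and> hh w < k \<and> p = perm w"
proof -
  have lp: "length p = m" "distinct p" "set p = {1..m}" using p(1) unfolding is_perm_def by auto
  show ?thesis
  proof (cases "descents p = {}")
    case True
    then have "\<forall>i. Suc i < length p \<longrightarrow> p!i < p!Suc i"
      unfolding descents_def using lp(2) nth_eq_iff_index_eq[OF lp(2)]
      by (metis (no_types, lifting) Suc_lessD empty_iff linorder_neqE_nat mem_Collect_eq n_not_Suc_n)
    then have "sorted_wrt (<) p" by (rule adj_sorted)
    then have "p = [1..<Suc m]"
      using lp by (intro sorted_distinct_set_unique) (auto simp: strict_sorted_iff intro: sorted_wrt_filter)
    then have "subseq [1..<Suc k] p \<and> length [1..<Suc k] = k \<and> sorted_wrt (<) [1..<Suc k]"
      using km upt_add_eq_append[of 1 "Suc k" "m - k"] by (auto intro!: prefix_imp_subseq simp: prefix_def)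
    then have "contains_pattern p (id_perm k)" unfolding contains_id_iff by blast
    then show ?thesis using p(3) unfolding avoids_def by simp
  next
    case False
    have fin: "finite (descents p)" unfolding descents_def by (rule finite_subset[of _ "{..<length p}"]) auto
    have "card (descents p) = 1" using p(2) False fin unfolding grassmannian_def
      by (metis card_0_eq le_antisym less_one not_le)
    then obtain d where dd: "descents p = {d}" by (rule card_1_singletonE)
    then have dlen: "Suc d < length p" unfolding descents_def by auto
    have step: "p!i < p!Suc i" if "i \<noteq> d" "Suc i < length p" for i
    proof -
      have "i \<notin> descents p" using dd that by auto
      then have "\<not> p!i > p!Suc i" using that unfolding descents_def by auto
      moreover have "p!i \<noteq> p!Suc i" using nth_eq_iff_index_eq[OF lp(2), of i "Suc i"] that by simp
      ultimately show ?thesis by simp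
    qed
    let ?T = "take (Suc d) p" and ?D = "drop (Suc d) p"
    let ?A = "set ?T"
    have sT: "sorted_wrt (<) ?T"
      by (rule adj_sorted) (use step dlen in auto)
    have sD: "sorted_wrt (<) ?D"
    proof (rule adj_sorted, intro allI impI)
      fix i assume "Suc i < length ?D"
      then have "Suc (Suc d + i) < length p" by simp
      then have "p ! (Suc d + i) < p ! Suc (Suc d + i)" by (intro step) auto
      then show "?D ! i < ?D ! Suc i" using dlen by (simp add: nth_drop)
    qed
    define w where "w = map (\<lambda>v. v \<notin> ?A) [1..<Suc m]"
    have lw: "length w = m" unfolding w_def by simp
    have wv: "w ! (v - Suc 0) = (v \<notin> ?A)" if "Suc 0 \<le> v" "v < Suc m" for v
      using that unfolding w_def by (auto simp: nth_upt)
    have Asub: "?A \<subseteq> {1..m}" using lp(3) set_take_subset[of "Suc d" p] by auto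
    have disj: "?A \<inter> set ?D = {}" using set_take_disj_set_drop_if_distinct[OF lp(2), of "Suc d" "Suc d"] by simp
    have un: "?A \<union> set ?D = {1..m}" using lp(3) by (metis set_append append_take_drop_id)
    have "fA w = filter (\<lambda>v. v \<in> ?A) [1..<Suc m]"
      unfolding fA_def lw by (rule filter_cong) (auto simp: wv)
    also have "\<dots> = ?T"
      using sT lp(2) Asub by (intro sorted_distinct_set_unique) (auto simp: strict_sorted_iff intro: sorted_wrt_filter)
    finally have eA: "fA w = ?T" .
    have "fB w = filter (\<lambda>v. v \<notin> ?A) [1..<Suc m]"
      unfolding fB_def lw by (rule filter_cong) (auto simp: wv)
    also have "\<dots> = ?D"
    proof (rule sorted_distinct_set_unique)
      show "set (filter (\<lambda>v. v \<notin> ?A) [1..<Suc m]) = set ?D" using disj un by auto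
    qed (use sD lp(2) in \<open>auto simp: strict_sorted_iff intro: sorted_wrt_filter\<close>)
    finally have eB: "fB w = ?D" .
    have pw: "p = perm w" unfolding perm_def eA eB by simp
    then have "hh w < k" using p(3) avoids_perm by simp
    then show ?thesis using lw pw by blast
  qed
qed


lemma card_S: assumes km: "k \<le> m"
  shows "card {p. is_perm m p \<and> grassmannian p \<and> avoids p (id_perm k)} = B k m"
proof -
  let ?W = "{w :: bool list. length w = m \<and> hh w < k}"
  have BW: "B k m = card ?W" unfolding B_def by (simp add: avoid_iff)
  have "{p. is_perm m p \<and> grassmannian p \<and> avoids p (id_perm k)} = perm ` ?W"
  proof
    show "{p. is_perm m p \<and> grassmannian p \<and> avoids p (id_perm k)} \<subseteq> perm ` ?W"
      using surj_perm[OF _ _ _ km] by blast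
    show "perm ` ?W \<subseteq> {p. is_perm m p \<and> grassmannian p \<and> avoids p (id_perm k)}"
      using perm_is_perm grass_perm avoids_perm by fastforce
  qed
  moreover have "inj_on perm ?W"
    by (rule inj_onI) (use perm_inj nonsorted_of_W km in auto)
  ultimately show ?thesis using BW card_image by metis
qed

theorem mainTheorem7:
  shows "(\<forall>k m :: nat. k \<ge> 1 \<longrightarrow> m \<ge> 1 \<longrightarrow>
            int (B k m) = (\<Sum>a \<in> {1..2 * int k - int m - 1}.
                              binom_int m (int k - a) - binom_int m (int k)))
       \<and> (\<forall>k m :: nat. 2 \<le> k \<longrightarrow> k \<le> m \<longrightarrow>
            int (card {p. is_perm m p \<and> grassmannian p \<and> avoids p (id_perm k)}) =
              (\<Sum>a \<in> {1..2 * int k - int m - 1}.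
                  binom_int m (int k - a) - binom_int m (int k)))"
  using part1 card_S by auto

end
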